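(* Let $\mathbb F$ be an infinite field and $\mathcal F$ a sheaf of finite-dimensional $\mathbb F$-vector spaces on a digraph $G$ such that $\dim\mathcal F(e)\le1$ for every $e\in E_G$. Then $h_1^{\rm twist}(\mathcal F)={\rm m.e.}(\mathcal F)$.
   Context: A digraph has finite vertex and edge sets with tail/head maps $t_G,h_G$. A sheaf $\mathcal F$ on $G$: finite-dimensional vector spaces $\mathcal F(P)$, $P\in V_G\sqcup E_G$, linear maps $\mathcal F(t,e)\colon\mathcal F(e)\to\mathcal F(t_Ge)$, $\mathcal F(h,e)\colon\mathcal F(e)\to\mathcal F(h_Ge)$; $\mathcal F(V)=\bigoplus_v\mathcal F(v)$, $\mathcal F(E)=\bigoplus_e\mathcal F(e)$; $d_h,d_t\colon\mathcal F(E)\to\mathcal F(V)$ send the summand $\mathcal F(e)$ into $\mathcal F(h_Ge)$ resp. $\mathcal F(t_Ge)$ via the restriction maps, $d=d_h-d_t$, $H_1=\ker d$. Twisting: with independent indeterminates $\psi(e)$, $e\in E_G$, $\mathcal F^\psi$ is the sheaf of $\mathbb F(\psi)$-vector spaces with values $\mathcal F(P)\otimes_{\mathbb F}\mathbb F(\psi)$, head maps $\mathcal F(h,e)$, tail maps $\psi(e)\mathcal F(t,e)$; $h_1^{\rm twist}(\mathcal F)=\dim_{\mathbb F(\psi)}H_1(\mathcal F^\psi)$. For $U\subset\mathcal F(V)$, $\Gamma_{\rm ht}(U)=\bigoplus_e\{w\in\mathcal F(e):d_hw\in U,d_tw\in U\}$, ${\rm excess}(\mathcal F,U)=\dim\Gamma_{\rm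 ht}(U)-\dim U$, ${\rm m.e.}(\mathcal F)=\max_U{\rm excess}(\mathcal F,U)$. *)

theory Defs
  imports "Graph_Theory.Digraph" "HOL-Library.Poly_Mapping" "HOL-Computational_Algebra.Fraction_Field" "HOL-Library.Function_Algebras"
begin

text \<open>The stalk F(v) is 'a^(sv_dim v),
  the stalk F(e) is 'a^(se_dim e); the restriction map F(h,e) : F(e) -> F(head e) is the
  matrix with entries s_hmap e j i (row j < sv_dim (head e), column i < se_dim e),
  and likewise s_tmap for F(t,e) : F(e) -> F(tail e).\<close>

record ('a, 'v, 'e) sheaf =
  sv_dim :: "'v \<Rightarrow> nat"
  se_dim :: "'e \<Rightarrow> nat"
  s_hmap :: "'e \<Rightarrow> nat \<Rightarrow> nat \<Rightarrow> 'a"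
  s_tmap :: "'e \<Rightarrow> nat \<Rightarrow> nat \<Rightarrow> 'a"

text \<open>F(V) = direct sum of vertex stalks, as functions on coordinates (v,j).\<close>
definition FV :: "('v,'e) pre_digraph \<Rightarrow> ('a::field,'v,'e) sheaf \<Rightarrow> ('v \<times> nat \<Rightarrow> 'a) set" where
  "FV G S = {x. \<forall>v j. x (v,j) \<noteq> 0 \<longrightarrow> v \<in> verts G \<and> j < sv_dim S v}"

definition FE :: "('v,'e) pre_digraph \<Rightarrow> ('a::field,'v,'e) sheaf \<Rightarrow> ('e \<times> nat \<Rightarrow> 'a) set" where
  "FE G S = {w. \<forall>e i. w (e,i) \<noteq> 0 \<longrightarrow> e \<in> arcs G \<and> i < se_dim S e}"

definition d_h :: "('v,'e) pre_digraph \<Rightarrow> ('a::field,'v,'e) sheaf \<Rightarrow> ('e \<times> nat \<Rightarrow> 'a) \<Rightarrow> ('v \<times> nat \<Rightarrow> 'a)" where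
  "d_h G S w = (\<lambda>(v,j). if v \<in> verts G \<and> j < sv_dim S v then
      (\<Sum>e\<in>{e\<in>arcs G. head G e = v}. \<Sum>i<se_dim S e. s_hmap S e j i * w (e,i)) else 0)"

definition d_t :: "('v,'e) pre_digraph \<Rightarrow> ('a::field,'v,'e) sheaf \<Rightarrow> ('e \<times> nat \<Rightarrow> 'a) \<Rightarrow> ('v \<times> nat \<Rightarrow> 'a)" where
  "d_t G S w = (\<lambda>(v,j). if v \<in> verts G \<and> j < sv_dim S v then
      (\<Sum>e\<in>{e\<in>arcs G. tail G e = v}. \<Sum>i<se_dim S e. s_tmap S e j i * w (e,i)) else 0)"

definition d_map :: "('v,'e) pre_digraph \<Rightarrow> ('a::field,'v,'e) sheaf \<Rightarrow> ('e \<times> nat \<Rightarrow> 'a) \<Rightarrow> ('v \<times> nat \<Rightarrow> 'a)" where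
  "d_map G S w = (\<lambda>p. d_h G S w p - d_t G S w p)"

definition H1 :: "('v,'e) pre_digraph \<Rightarrow> ('a::field,'v,'e) sheaf \<Rightarrow> ('e \<times> nat \<Rightarrow> 'a) set" where
  "H1 G S = {w \<in> FE G S. d_map G S w = (\<lambda>_. 0)}"

definition fscale :: "'a::field \<Rightarrow> ('i \<Rightarrow> 'a) \<Rightarrow> ('i \<Rightarrow> 'a)" where
  "fscale c f = (\<lambda>i. c * f i)"

definition vdim :: "('i \<Rightarrow> 'a::field) set \<Rightarrow> nat" where
  "vdim X = vector_space.dim (fscale :: 'a \<Rightarrow> ('i \<Rightarrow> 'a) \<Rightarrow> ('i \<Rightarrow> 'a)) X"

definition is_subspace :: "('i \<Rightarrow> 'a::field) set \<Rightarrow> bool" where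
  "is_subspace X = module.subspace (fscale :: 'a \<Rightarrow> ('i \<Rightarrow> 'a) \<Rightarrow> ('i \<Rightarrow> 'a)) X"

text \<open>The field of rational functions F(psi) in independent indeterminates psi(e), e an edge:
  the fraction field of the polynomial ring F[psi(e) : e].\<close>
type_synonym ('a, 'e) ratfun = "((('e \<Rightarrow>\<^sub>0 nat) \<Rightarrow>\<^sub>0 'a) fract)"

definition rf_const :: "'a::field \<Rightarrow> ('a, 'e::linorder) ratfun" where
  "rf_const c = Fract (Poly_Mapping.single 0 c) 1"

definition psi :: "'e::linorder \<Rightarrow> ('a::field, 'e) ratfun" where
  "psi e = Fract (Poly_Mapping.single (Poly_Mapping.single e 1) 1) 1"

definition twist :: "('a::field,'v,'e::linorder) sheaf \<Rightarrow> (('a,'e) ratfun,'v,'e) sheaf" where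
  "twist S = \<lparr> sv_dim = sv_dim S, se_dim = se_dim S,
      s_hmap = (\<lambda>e j i. rf_const (s_hmap S e j i)),
      s_tmap = (\<lambda>e j i. psi e * rf_const (s_tmap S e j i)) \<rparr>"

definition h1_twist :: "('v,'e::linorder) pre_digraph \<Rightarrow> ('a::field,'v,'e) sheaf \<Rightarrow> nat" where
  "h1_twist G S = vdim (H1 G (twist S))"

definition edge_comp :: "'e \<Rightarrow> ('e \<times> nat \<Rightarrow> 'a::zero) \<Rightarrow> ('e \<times> nat \<Rightarrow> 'a)" where
  "edge_comp e w = (\<lambda>(e',i). if e' = e then w (e',i) else 0)"

definition Gamma_ht :: "('v,'e) pre_digraph \<Rightarrow> ('a::field,'v,'e) sheaf \<Rightarrow> ('v \<times> nat \<Rightarrow> 'a) set \<Rightarrow> ('e \<times> nat \<Rightarrow> 'a) set" where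
  "Gamma_ht G S U = {w \<in> FE G S. \<forall>e \<in> arcs G.
      d_h G S (edge_comp e w) \<in> U \<and> d_t G S (edge_comp e w) \<in> U}"

definition excess :: "('v,'e) pre_digraph \<Rightarrow> ('a::field,'v,'e) sheaf \<Rightarrow> ('v \<times> nat \<Rightarrow> 'a) set \<Rightarrow> int" where
  "excess G S U = int (vdim (Gamma_ht G S U)) - int (vdim U)"

definition max_excess :: "('v,'e) pre_digraph \<Rightarrow> ('a::field,'v,'e) sheaf \<Rightarrow> int" where
  "max_excess G S = Max {excess G S U | U. is_subspace U \<and> U \<subseteq> FV G S}"

end

theory Submission
  imports Defs
begin


definition sc :: "'a::field \<Rightarrow> 'e \<Rightarrow> (('e \<Rightarrow>\<^sub>0 nat) \<Rightarrow>\<^sub>0 'a) \<Rightarrow> (('e \<Rightarrow>\<^sub>0 nat) \<Rightarrow>\<^sub>0 'a)" where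
  "sc c e p = Abs_poly_mapping (\<lambda>m::'e \<Rightarrow>\<^sub>0 nat. c ^ Poly_Mapping.lookup m e * Poly_Mapping.lookup p m)"

lemma lookup_sc: "Poly_Mapping.lookup (sc c e p) m = c ^ Poly_Mapping.lookup m e * Poly_Mapping.lookup p m"
proof -
  have "finite {m. c ^ Poly_Mapping.lookup m e * Poly_Mapping.lookup p m \<noteq> 0}"
    by (rule finite_subset[of _ "Poly_Mapping.keys p"]) (auto simp: in_keys_iff)
  then show ?thesis unfolding sc_def by simp
qed

lemma sc_add: "sc c e (p + q) = sc c e p + sc c e q"
  by (rule poly_mapping_eqI) (simp add: lookup_sc lookup_add algebra_simps)

lemma sc_minus: "sc c e (p - q) = sc c e p - sc c e q"
  by (rule poly_mapping_eqI) (simp add: lookup_sc lookup_minus algebra_simps)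

lemma sc_zero: "sc c e 0 = 0"
  by (rule poly_mapping_eqI) (simp add: lookup_sc)

lemma sc_single: "sc c e (Poly_Mapping.single m a) = Poly_Mapping.single m (c ^ Poly_Mapping.lookup m e * a)"
  by (rule poly_mapping_eqI) (simp add: lookup_sc lookup_single when_def)

lemma sc_one: "sc c e 1 = 1"
  by (rule poly_mapping_eqI) (simp add: lookup_sc lookup_one when_def)

lemma sc_eq_0: "c \<noteq> 0 \<Longrightarrow> sc c e p = 0 \<longleftrightarrow> p = 0"
  by (auto simp: poly_mapping_eq_iff fun_eq_iff lookup_sc)

lemma sc_mult:
  fixes f g :: "('e \<Rightarrow>\<^sub>0 nat) \<Rightarrow>\<^sub>0 'a::field"
  shows "sc c e (f * g) = sc c e f * sc c e g"
proof (rule poly_mapping_eqI)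
  fix k
  have fin1: "finite {l. Poly_Mapping.lookup f l * X l \<noteq> 0}" for X :: "_ \<Rightarrow> 'a"
    by (rule finite_subset[of _ "Poly_Mapping.keys f"]) (auto simp: in_keys_iff)
  have fin2: "finite {q. (Y q * Poly_Mapping.lookup g q when k = l + q) \<noteq> 0}" for Y :: "_ \<Rightarrow> 'a" and l
    by (rule finite_subset[of _ "Poly_Mapping.keys g"]) (auto simp: in_keys_iff when_def)
  have fin2': "finite {q. (Poly_Mapping.lookup g q when k = l + q) \<noteq> 0}" for l
    by (rule finite_subset[of _ "Poly_Mapping.keys g"]) (auto simp: in_keys_iff when_def)
  have "Poly_Mapping.lookup (sc c e (f * g)) k = c ^ Poly_Mapping.lookup k e * (\<Sum>l. Poly_Mapping.lookup f l * (\<Sum>q. Poly_Mapping.lookup g q when k = l + q))"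
    by (simp add: lookup_sc lookup_mult)
  also have "\<dots> = (\<Sum>l. c ^ Poly_Mapping.lookup k e * (Poly_Mapping.lookup f l * (\<Sum>q. Poly_Mapping.lookup g q when k = l + q)))"
    by (rule Sum_any_right_distrib[OF fin1])
  also have "\<dots> = (\<Sum>l. (c ^ Poly_Mapping.lookup l e * Poly_Mapping.lookup f l) * (\<Sum>q. (c ^ Poly_Mapping.lookup q e * Poly_Mapping.lookup g q) when k = l + q))"
  proof (rule Sum_any.cong)
    fix l
    have pt: "c ^ Poly_Mapping.lookup k e * (Poly_Mapping.lookup g q when k = l + q) = c ^ Poly_Mapping.lookup l e * ((c ^ Poly_Mapping.lookup q e * Poly_Mapping.lookup g q) when k = l + q)" for q
      by (auto simp: when_def lookup_add power_add)
    have "c ^ Poly_Mapping.lookup k e * (Poly_Mapping.lookup f l * (\<Sum>q. Poly_Mapping.lookup g q when k = l + q))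
       = Poly_Mapping.lookup f l * (c ^ Poly_Mapping.lookup k e * (\<Sum>q. Poly_Mapping.lookup g q when k = l + q))"
      by (simp add: mult.left_commute)
    also have "\<dots> = Poly_Mapping.lookup f l * (\<Sum>q. c ^ Poly_Mapping.lookup k e * (Poly_Mapping.lookup g q when k = l + q))"
      by (simp add: Sum_any_right_distrib[OF fin2'])
    also have "\<dots> = Poly_Mapping.lookup f l * (\<Sum>q. c ^ Poly_Mapping.lookup l e * ((c ^ Poly_Mapping.lookup q e * Poly_Mapping.lookup g q) when k = l + q))"
      by (simp add: pt)
    also have "\<dots> = Poly_Mapping.lookup f l * (c ^ Poly_Mapping.lookup l e * (\<Sum>q. (c ^ Poly_Mapping.lookup q e * Poly_Mapping.lookup g q) when k = l + q))"
      by (simp add: Sum_any_right_distrib[OF fin2])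
    finally show "c ^ Poly_Mapping.lookup k e * (Poly_Mapping.lookup f l * (\<Sum>q. Poly_Mapping.lookup g q when k = l + q)) = (c ^ Poly_Mapping.lookup l e * Poly_Mapping.lookup f l) * (\<Sum>q. (c ^ Poly_Mapping.lookup q e * Poly_Mapping.lookup g q) when k = l + q)"
      by (simp add: mult_ac)
  qed
  also have "\<dots> = Poly_Mapping.lookup (sc c e f * sc c e g) k"
    by (simp add: lookup_mult lookup_sc)
  finally show "Poly_Mapping.lookup (sc c e (f * g)) k = Poly_Mapping.lookup (sc c e f * sc c e g) k" .
qed

lift_definition scf :: "'a::field \<Rightarrow> 'e::linorder \<Rightarrow> ('a, 'e) ratfun \<Rightarrow> ('a, 'e) ratfun"
  is "\<lambda>c e x. if c = 0 then (0, 1) else (sc c e (fst x), sc c e (snd x))"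
proof -
  fix c :: 'a and e :: 'e and x y :: "(('e \<Rightarrow>\<^sub>0 nat) \<Rightarrow>\<^sub>0 'a) \<times> (('e \<Rightarrow>\<^sub>0 nat) \<Rightarrow>\<^sub>0 'a)"
  assume "fractrel x y"
  then show "fractrel (if c = 0 then (0, 1) else (sc c e (fst x), sc c e (snd x)))
                      (if c = 0 then (0, 1) else (sc c e (fst y), sc c e (snd y)))"
    by (auto simp: sc_eq_0 sc_mult[symmetric])
qed

lemma scf_Fract: "c \<noteq> 0 \<Longrightarrow> scf c e (Fract a b) = Fract (sc c e a) (sc c e b)"
  by transfer (auto simp: sc_eq_0 sc_zero)

lemma scf_add: "c \<noteq> 0 \<Longrightarrow> scf c e (x + y) = scf c e x + scf c e y"
  by (cases x, cases y) (simp add: scf_Fract sc_add sc_mult sc_eq_0)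

lemma scf_mult: "c \<noteq> 0 \<Longrightarrow> scf c e (x * y) = scf c e x * scf c e y"
  by (cases x, cases y) (simp add: scf_Fract sc_mult sc_eq_0)

lemma scf_zero: "c \<noteq> 0 \<Longrightarrow> scf c e 0 = 0"
  by (simp add: Zero_fract_def scf_Fract sc_zero sc_one)

lemma scf_uminus: "c \<noteq> 0 \<Longrightarrow> scf c e (- x) = - scf c e x"
proof -
  assume c: "c \<noteq> 0"
  have "scf c e x + scf c e (- x) = 0" using scf_add[OF c, of e x "- x"] by (simp add: scf_zero c)
  then show ?thesis by (simp add: add_eq_0_iff2)
qed

lemma scf_diff: "c \<noteq> 0 \<Longrightarrow> scf c e (x - y) = scf c e x - scf c e y"
  by (simp add: diff_conv_add_uminus scf_add scf_uminus del: add_uminus_conv_diff)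

lemma scf_sum: "c \<noteq> 0 \<Longrightarrow> scf c e (sum f A) = sum (\<lambda>x. scf c e (f x)) A"
  by (induction A rule: infinite_finite_induct) (simp_all add: scf_zero scf_add)

lemma scf_const: "c \<noteq> 0 \<Longrightarrow> scf c e (rf_const x) = rf_const x"
  by (simp add: rf_const_def scf_Fract sc_single sc_one)

lemma scf_psi_other: "c \<noteq> 0 \<Longrightarrow> f \<noteq> e \<Longrightarrow> scf c e (psi f) = psi f"
  by (simp add: psi_def scf_Fract sc_single sc_one lookup_single)

lemma scf_psi_self: "c \<noteq> 0 \<Longrightarrow> scf c e (psi e) = rf_const c * psi e"
  by (simp add: psi_def rf_const_def scf_Fract sc_single sc_one lookup_single mult_single)



lemma vs_fscale: "vector_space (fscale :: 'k::field \<Rightarrow> ('i \<Rightarrow> 'k) \<Rightarrow> ('i \<Rightarrow> 'k))"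
  by unfold_locales (auto simp: fscale_def fun_eq_iff algebra_simps)

interpretation fs: vector_space "fscale :: 'k::field \<Rightarrow> ('i \<Rightarrow> 'k) \<Rightarrow> ('i \<Rightarrow> 'k)"
  by (rule vs_fscale)

lemma vdim_eq: "vdim X = fs.dim X"
  by (simp add: vdim_def)

lemma is_subspace_eq: "is_subspace X = fs.subspace X"
  by (simp add: is_subspace_def)

lemma sum_fun_pt: "(sum f A) x = sum (\<lambda>a. f a x) A"
  by (induction A rule: infinite_finite_induct) auto

lemma fscale_apply: "fscale c f x = c * f x"
  by (simp add: fscale_def)

lemma fscale_0: "fscale c 0 = 0"
  by (simp add: fscale_def fun_eq_iff)

lemma fs_dim_empty: "fs.dim {} = 0"
  using fs.dim_eq_card_independent[OF fs.independent_empty] by simp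

lemma dim_union_le:
  assumes "finite A" "finite B"
  shows "fs.dim (A \<union> B) \<le> fs.dim A + card B"
proof -
  obtain BA where BA: "BA \<subseteq> A" "fs.independent BA" "A \<subseteq> fs.span BA" "card BA = fs.dim A"
    by (rule fs.basis_exists)
  have fin: "finite BA" using BA(1) assms(1) finite_subset by blast
  have "A \<union> B \<subseteq> fs.span (BA \<union> B)"
    using BA(3) fs.span_mono[of BA "BA \<union> B"] fs.span_superset[of "BA \<union> B"] by blast
  then have "fs.dim (A \<union> B) \<le> card (BA \<union> B)"
    using fin assms(2) by (intro fs.dim_le_card) auto
  also have "\<dots> \<le> card BA + card B" by (rule card_Un_le)
  finally show ?thesis using BA(4) by simp
qed

lemma dim_insert_new:
  assumes "A \<subseteq> fs.span F" "finite F" "x \<notin> fs.span A"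
  shows "fs.dim (insert x A) = Suc (fs.dim A)"
proof -
  obtain BA where BA: "BA \<subseteq> A" "fs.independent BA" "A \<subseteq> fs.span BA" "card BA = fs.dim A"
    by (rule fs.basis_exists)
  have fin: "finite BA"
    using fs.independent_span_bound[OF assms(2) BA(2)] BA(1) assms(1) by blast
  have spBA: "fs.span BA = fs.span A"
    using BA(1) BA(3) by (metis fs.span_mono fs.span_span subset_antisym)
  have xn: "x \<notin> fs.span BA" using assms(3) spBA by simp
  have ind: "fs.independent (insert x BA)" by (rule fs.independent_insertI[OF xn BA(2)])
  have "insert x A \<subseteq> fs.span (insert x BA)"
    using BA(3) fs.span_mono[of BA "insert x BA"] fs.span_base[of x "insert x BA"] by blast
  then have "card (insert x BA) = fs.dim (insert x A)"
    using BA(1) ind by (intro fs.basis_card_eq_dim) auto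
  moreover have "x \<notin> BA" using xn fs.span_base by blast
  ultimately show ?thesis using fin BA(4) by simp
qed

lemma dim_insert_old:
  assumes "x \<in> fs.span A"
  shows "fs.dim (insert x A) = fs.dim A"
  using fs.span_redundant[OF assms] fs.span_eq_dim by blast

definition delta :: "'i \<Rightarrow> ('i \<Rightarrow> 'k::field)" where
  "delta p = (\<lambda>q. if q = p then 1 else 0)"

definition SP :: "'i set \<Rightarrow> ('i \<Rightarrow> 'k::field) set" where
  "SP P = {x. \<forall>q. x q \<noteq> 0 \<longrightarrow> q \<in> P}"

lemma SP_sum:
  assumes "finite P" "x \<in> SP P"
  shows "x = (\<Sum>p\<in>P. fscale (x p) (delta p))"
proof
  fix q
  show "x q = (\<Sum>p\<in>P. fscale (x p) (delta p)) q"
    using assms by (auto simp: fscale_apply sum_fun_pt delta_def SP_def if_distrib cong: if_cong)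
qed

lemma SP_span: assumes "finite P" shows "SP P \<subseteq> fs.span (delta ` P)"
proof
  fix x assume "x \<in> SP P"
  with assms have "x = (\<Sum>p\<in>P. fscale (x p) (delta p))" by (rule SP_sum)
  also have "\<dots> \<in> fs.span (delta ` P)"
    by (intro fs.span_sum fs.span_scale fs.span_base) auto
  finally show "x \<in> fs.span (delta ` P)" .
qed

lemma delta_inj: "inj (delta :: 'i \<Rightarrow> ('i \<Rightarrow> 'k::field))"
  by (auto simp: inj_def delta_def fun_eq_iff)

lemma span_vanish:
  fixes S :: "('i \<Rightarrow> 'k::field) set" and p :: 'i
  assumes "x \<in> fs.span S" "\<And>y. y \<in> S \<Longrightarrow> y p = (0::'k::field)"
  shows "x p = 0"
proof -
  have "fs.subspace {y :: 'i \<Rightarrow> 'k. y p = 0}"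
    by (auto simp: fscale_apply fs.subspace_def)
  from fs.span_subspace_induct[OF assms(1) this] assms(2) show ?thesis by auto
qed

lemma delta_indep: "fs.independent (delta ` P :: ('i \<Rightarrow> 'k::field) set)"
proof
  assume "fs.dependent (delta ` P :: ('i \<Rightarrow> 'k::field) set)"
  then obtain a :: "'i \<Rightarrow> 'k" where a: "a \<in> delta ` P" "a \<in> fs.span (delta ` P - {a})"
    unfolding fs.dependent_def by auto
  then obtain p where p: "p \<in> P" "a = delta p" by auto
  have "\<And>y. y \<in> delta ` P - {a} \<Longrightarrow> y p = 0"
    using p by (auto simp: delta_def)
  with a(2) have "a p = 0" by (rule span_vanish)
  then show False by (simp add: p delta_def)
qed

lemma delta_SP: "p \<in> P \<Longrightarrow> delta p \<in> SP P"
  by (auto simp: delta_def SP_def)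

lemma dim_SP: "finite P \<Longrightarrow> fs.dim (SP P :: ('i \<Rightarrow> 'k::field) set) = card P"
proof -
  assume fin: "finite P"
  have "card (delta ` P :: ('i \<Rightarrow> 'k) set) = fs.dim (SP P :: ('i \<Rightarrow> 'k) set)"
    using delta_SP[of _ P] SP_span[OF fin] delta_indep[of P] by (intro fs.basis_card_eq_dim) auto
  moreover have "card (delta ` P :: ('i \<Rightarrow> 'k) set) = card P"
    using delta_inj by (metis card_image inj_on_def inj_def)
  ultimately show ?thesis by simp
qed

lemma subspace_SP: "fs.subspace (SP P)"
  unfolding fs.subspace_def SP_def by (auto simp: fscale_apply, metis add.right_neutral)

lemma span_family:
  fixes \<gamma> :: "'e \<Rightarrow> ('i \<Rightarrow> 'k::field)"
  assumes "finite D" "x \<in> fs.span (\<gamma> ` D)"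
  shows "\<exists>c. x = (\<Sum>f\<in>D. fscale (c f) (\<gamma> f))"
proof -
  let ?Y = "{y. \<exists>c. y = (\<Sum>f\<in>D. fscale (c f) (\<gamma> f))}"
  have sub: "fs.subspace ?Y"
    unfolding fs.subspace_def
  proof (intro conjI allI impI ballI)
    show "0 \<in> ?Y" by (rule CollectI, rule exI[of _ "\<lambda>_. 0"]) (simp add: fun_eq_iff sum_fun_pt)
    fix y z assume "y \<in> ?Y" "z \<in> ?Y"
    then obtain c d where "y = (\<Sum>f\<in>D. fscale (c f) (\<gamma> f))" "z = (\<Sum>f\<in>D. fscale (d f) (\<gamma> f))" by blast
    then show "y + z \<in> ?Y"
      by (intro CollectI exI[of _ "\<lambda>f. c f + d f"]) (simp add: fun_eq_iff sum_fun_pt algebra_simps sum.distrib)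
  next
    fix a :: 'k and y assume "y \<in> ?Y"
    then obtain c where "y = (\<Sum>f\<in>D. fscale (c f) (\<gamma> f))" by blast
    then show "fscale a y \<in> ?Y"
      by (intro CollectI exI[of _ "\<lambda>f. a * c f"]) (simp add: fscale_apply fun_eq_iff sum_fun_pt algebra_simps sum_distrib_left)
  qed
  have "\<gamma> ` D \<subseteq> ?Y"
  proof
    fix y assume "y \<in> \<gamma> ` D"
    then obtain g where g: "g \<in> D" "y = \<gamma> g" by blast
    show "y \<in> ?Y"
      by (intro CollectI exI[of _ "\<lambda>f. if f = g then 1 else 0"])
         (simp add: g fun_eq_iff sum_fun_pt fscale_def assms(1) if_distrib[where f="\<lambda>c. c * _"] cong: if_cong)
  qed
  then have "fs.span (\<gamma> ` D) \<subseteq> ?Y" using sub by (rule fs.span_minimal)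
  then show ?thesis using assms(2) by blast
qed

definition Zs :: "('e \<Rightarrow> ('i \<Rightarrow> 'k::field)) \<Rightarrow> 'e set \<Rightarrow> ('e \<times> nat \<Rightarrow> 'k) set" where
  "Zs \<gamma> D = {w. (\<forall>e i. w (e, i) \<noteq> 0 \<longrightarrow> e \<in> D \<and> i = 0) \<and> (\<Sum>e\<in>D. fscale (w (e, 0)) (\<gamma> e)) = 0}"

lemma Zs_SP: "Zs \<gamma> D \<subseteq> SP (D \<times> {0})"
  by (auto simp: Zs_def SP_def)

lemma Zs_span: "finite D \<Longrightarrow> Zs \<gamma> D \<subseteq> fs.span (delta ` (D \<times> {0}))"
  using subset_trans[OF Zs_SP SP_span[of "D \<times> {0}"]] by simp

lemma Zs_mono:
  assumes "e \<notin> D" "finite D"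
  shows "Zs \<gamma> D \<subseteq> Zs \<gamma> (insert e D)"
proof
  fix w assume w: "w \<in> Zs \<gamma> D"
  then have "w (e, 0) = 0" using assms(1) by (auto simp: Zs_def)
  then show "w \<in> Zs \<gamma> (insert e D)"
    using w assms by (auto simp: Zs_def fun_eq_iff)
qed

lemma RN:
  fixes \<gamma> :: "'e \<Rightarrow> ('i \<Rightarrow> 'k::field)"
  assumes "finite D"
  shows "fs.dim (Zs \<gamma> D) + fs.dim (\<gamma> ` D) = card D"
  using assms
proof (induction D rule: finite_induct)
  case empty
  have "Zs \<gamma> {} = {0}"
  proof (rule set_eqI, rule iffI)
    fix w assume "w \<in> Zs \<gamma> {}"
    then have "\<forall>e i. w (e, i) = 0" by (simp add: Zs_def)
    then show "w \<in> {0}" by (simp add: fun_eq_iff)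
  qed (simp add: Zs_def)
  then have "Zs \<gamma> {} = fs.span {}" by (simp add: fs.span_empty)
  then have "fs.dim (Zs \<gamma> {}) = 0" using fs_dim_empty fs.dim_span by metis
  then show ?case by (simp add: fs_dim_empty)
next
  case (insert e D)
  have finD: "finite (D \<times> {0::nat})" using insert(1) by simp
  show ?case
  proof (cases "\<gamma> e \<in> fs.span (\<gamma> ` D)")
    case True
    obtain c where c: "\<gamma> e = (\<Sum>f\<in>D. fscale (c f) (\<gamma> f))"
      using span_family[OF insert(1) True] by blast
    define z0 :: "'e \<times> nat \<Rightarrow> 'k" where
      "z0 = (\<lambda>(f, i). if i = 0 then (if f = e then 1 else if f \<in> D then - c f else 0) else 0)"
    have z0e: "z0 (e, 0) = 1" by (simp add: z0_def)
    have z0D: "f \<in> D \<Longrightarrow> z0 (f, 0) = - c f" for f using insert(2) by (auto simp: z0_def)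
    have z0Z: "z0 \<in> Zs \<gamma> (insert e D)"
    proof -
      have "(\<Sum>f\<in>insert e D. fscale (z0 (f, 0)) (\<gamma> f)) = \<gamma> e + (\<Sum>f\<in>D. fscale (- c f) (\<gamma> f))"
        using insert(1,2) by (simp add: z0e z0D fscale_def fun_eq_iff)
      also have "\<dots> = 0" by (simp add: c fun_eq_iff sum_fun_pt sum_negf)
      finally show ?thesis by (auto simp: Zs_def z0_def fscale_apply split: if_splits)
    qed
    have notin: "z0 \<notin> fs.span (Zs \<gamma> D)"
    proof
      assume "z0 \<in> fs.span (Zs \<gamma> D)"
      then have "z0 (e, 0) = 0"
        by (rule span_vanish) (use insert(2) in \<open>auto simp: Zs_def\<close>)
      then show False by (simp add: z0e)
    qed
    have spaneq: "fs.span (Zs \<gamma> (insert e D)) = fs.span (insert z0 (Zs \<gamma> D))"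
    proof (rule subset_antisym)
      show "fs.span (Zs \<gamma> (insert e D)) \<subseteq> fs.span (insert z0 (Zs \<gamma> D))"
      proof (rule fs.span_minimal[OF _ fs.subspace_span], rule subsetI)
        fix w assume w: "w \<in> Zs \<gamma> (insert e D)"
        define w' where "w' = w - fscale (w (e, 0)) z0"
        have w'Z: "w' \<in> Zs \<gamma> D"
        proof -
          have supp: "w' (f, i) \<noteq> 0 \<Longrightarrow> f \<in> D \<and> i = 0" for f i
            using w by (auto simp: w'_def Zs_def z0_def fscale_apply split: if_splits)
          have "(\<Sum>f\<in>insert e D. fscale (w' (f, 0)) (\<gamma> f)) =
                (\<Sum>f\<in>insert e D. fscale (w (f, 0)) (\<gamma> f)) - fscale (w (e, 0)) (\<Sum>f\<in>insert e D. fscale (z0 (f, 0)) (\<gamma> f))"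
            by (simp add: w'_def fun_eq_iff sum_fun_pt algebra_simps sum_subtractf sum_distrib_left fscale_apply)
          also have "\<dots> = 0"
          proof -
            have a: "(\<Sum>f\<in>insert e D. fscale (w (f, 0)) (\<gamma> f)) = 0" using w by (simp add: Zs_def)
            have b: "(\<Sum>f\<in>insert e D. fscale (z0 (f, 0)) (\<gamma> f)) = 0" using z0Z by (simp add: Zs_def)
            show ?thesis by (simp only: a b fscale_0) simp
          qed
          finally have s0: "(\<Sum>f\<in>insert e D. fscale (w' (f, 0)) (\<gamma> f)) = 0" .
          have "w' (e, 0) = 0" by (simp add: w'_def z0e fscale_apply)
          then have "(\<Sum>f\<in>D. fscale (w' (f, 0)) (\<gamma> f)) = 0"
            using s0 insert(1,2) by (simp add: fun_eq_iff)
          then show ?thesis using supp by (auto simp: Zs_def)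
        qed
        have "w = w' + fscale (w (e, 0)) z0" by (simp add: w'_def fun_eq_iff)
        also have "\<dots> \<in> fs.span (insert z0 (Zs \<gamma> D))"
          by (intro fs.span_add fs.span_scale fs.span_base) (auto simp: w'Z)
        finally show "w \<in> fs.span (insert z0 (Zs \<gamma> D))" .
      qed
      show "fs.span (insert z0 (Zs \<gamma> D)) \<subseteq> fs.span (Zs \<gamma> (insert e D))"
        using z0Z Zs_mono[OF insert(2,1)] by (intro fs.span_mono) auto
    qed
    have "fs.dim (Zs \<gamma> (insert e D)) = fs.dim (insert z0 (Zs \<gamma> D))"
      using spaneq fs.span_eq_dim by blast
    also have "\<dots> = Suc (fs.dim (Zs \<gamma> D))"
      by (rule dim_insert_new[OF Zs_span[OF insert(1)] _ notin]) (simp add: insert(1))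
    finally have 1: "fs.dim (Zs \<gamma> (insert e D)) = Suc (fs.dim (Zs \<gamma> D))" .
    have 2: "fs.dim (\<gamma> ` insert e D) = fs.dim (\<gamma> ` D)"
      using dim_insert_old[OF True] by simp
    show ?thesis using 1 2 insert by simp
  next
    case False
    have Zeq: "Zs \<gamma> (insert e D) = Zs \<gamma> D"
    proof (rule subset_antisym)
      show "Zs \<gamma> (insert e D) \<subseteq> Zs \<gamma> D"
      proof
        fix w assume w: "w \<in> Zs \<gamma> (insert e D)"
        have s: "fscale (w (e, 0)) (\<gamma> e) + (\<Sum>f\<in>D. fscale (w (f, 0)) (\<gamma> f)) = 0"
          using w insert(1,2) by (simp add: Zs_def)
        have we: "w (e, 0) = 0"
        proof (rule ccontr)
          assume ne: "w (e, 0) \<noteq> 0"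
          have "fscale (w (e, 0)) (\<gamma> e) = - (\<Sum>f\<in>D. fscale (w (f, 0)) (\<gamma> f))"
            using s by (simp add: eq_neg_iff_add_eq_0)
          also have "\<dots> \<in> fs.span (\<gamma> ` D)"
            by (intro fs.span_neg fs.span_sum fs.span_scale fs.span_base) auto
          finally have "fscale (inverse (w (e, 0))) (fscale (w (e, 0)) (\<gamma> e)) \<in> fs.span (\<gamma> ` D)"
            by (rule fs.span_scale)
          moreover have "fscale (inverse (w (e, 0))) (fscale (w (e, 0)) (\<gamma> e)) = \<gamma> e"
            using ne by (simp add: fscale_def fun_eq_iff mult.assoc[symmetric])
          ultimately show False using False by simp
        qed
        then show "w \<in> Zs \<gamma> D" using w s
          by (auto simp: Zs_def fun_eq_iff)
      qed
      show "Zs \<gamma> D \<subseteq> Zs \<gamma> (insert e D)" by (rule Zs_mono[OF insert(2,1)])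
    qed
    have 2: "fs.dim (\<gamma> ` insert e D) = Suc (fs.dim (\<gamma> ` D))"
      using dim_insert_new[OF fs.span_superset[of "\<gamma> ` D"] _ False] insert(1)
      by simp
    show ?thesis using Zeq 2 insert by simp
  qed
qed



lemma rf_const_add: "rf_const (x + y) = rf_const x + rf_const y"
  by (simp add: rf_const_def single_add)

lemma rf_const_mult: "rf_const (x * y) = rf_const x * rf_const y"
  by (simp add: rf_const_def mult_single)

lemma rf_const_0: "rf_const 0 = 0"
  by (simp add: rf_const_def Zero_fract_def)

lemma rf_const_1: "rf_const 1 = 1"
  by (simp add: rf_const_def One_fract_def one_poly_mapping_def)

lemma rf_const_inj: "(rf_const x :: ('a::field, 'b::linorder) ratfun) = rf_const y \<longleftrightarrow> x = y"
proof
  assume "(rf_const x :: ('a, 'b) ratfun) = rf_const y"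
  then have "(Poly_Mapping.single 0 x :: ('b \<Rightarrow>\<^sub>0 nat) \<Rightarrow>\<^sub>0 'a) = Poly_Mapping.single 0 y"
    by (simp add: rf_const_def eq_fract)
  then have "Poly_Mapping.lookup (Poly_Mapping.single 0 x :: ('b \<Rightarrow>\<^sub>0 nat) \<Rightarrow>\<^sub>0 'a) 0 = Poly_Mapping.lookup (Poly_Mapping.single 0 y :: ('b \<Rightarrow>\<^sub>0 nat) \<Rightarrow>\<^sub>0 'a) 0"
    by simp
  then show "x = y" by simp
qed simp

lemma rf_const_uminus: "(rf_const (- x) :: ('a::field, 'b::linorder) ratfun) = - rf_const x"
proof -
  have "rf_const x + rf_const (- x) = (0 :: ('a, 'b) ratfun)"
    using rf_const_add[of x "- x"] by (simp add: rf_const_0)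
  then show ?thesis by (simp add: add_eq_0_iff)
qed

lemma rf_const_diff: "rf_const (x - y) = rf_const x - rf_const y"
  using rf_const_add[of x "- y"] by (simp add: rf_const_uminus)

lemma single_nz: "(v::'b::zero) \<noteq> 0 \<Longrightarrow> Poly_Mapping.single k v \<noteq> 0"
  by (metis lookup_single_eq lookup_zero)

lemma psi_nonzero: "psi e \<noteq> 0"
  by (simp add: psi_def Zero_fract_def eq_fract single_nz)

definition iota :: "('i \<Rightarrow> 'a::field) \<Rightarrow> ('i \<Rightarrow> ('a, 'e::linorder) ratfun)" where
  "iota x = (\<lambda>p. rf_const (x p))"

lemma iota_add: "iota (x + y) = iota x + iota y"
  by (simp add: iota_def fun_eq_iff rf_const_add)

lemma iota_0: "iota 0 = 0"
  by (simp add: iota_def fun_eq_iff rf_const_0)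

lemma iota_scale: "iota (fscale c x) = fscale (rf_const c) (iota x)"
  by (simp add: iota_def fun_eq_iff rf_const_mult fscale_def)

lemma iota_inj: "iota x = iota y \<longleftrightarrow> x = y"
  by (simp add: iota_def fun_eq_iff rf_const_inj)

lemma iota_span:
  assumes "x \<in> fs.span S"
  shows "(iota x :: 'i \<Rightarrow> ('a::field, 'e::linorder) ratfun) \<in> fs.span (iota ` S)"
proof -
  have "fs.subspace {x. (iota x :: 'i \<Rightarrow> ('a, 'e) ratfun) \<in> fs.span (iota ` S)}"
    unfolding fs.subspace_def
    by (auto simp: iota_0 iota_add iota_scale intro: fs.span_add fs.span_scale fs.span_zero)
  from fs.span_subspace_induct[OF assms this] show ?thesis
    by (auto intro: fs.span_base)
qed

lemma Fract_sum1: "(\<Sum>b\<in>B. Fract (f b) 1) = Fract (sum f B) (1::'a::idom)"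
  by (induction B rule: infinite_finite_induct) (simp_all add: Zero_fract_def)

lemma lookup_mult_const:
  fixes P :: "('e \<Rightarrow>\<^sub>0 nat) \<Rightarrow>\<^sub>0 'a::field"
  shows "Poly_Mapping.lookup (P * Poly_Mapping.single 0 c) m = Poly_Mapping.lookup P m * (c::'a::field)"
proof -
  have "P * Poly_Mapping.single 0 c = Poly_Mapping.map ((*) c) P"
    by (simp add: mult_map_scale_conv_mult mult.commute)
  then show ?thesis by (simp add: Poly_Mapping.map.rep_eq when_def mult.commute)
qed

lemma iota_indep:
  fixes B :: "('i \<Rightarrow> 'a::field) set"
  assumes "finite B" "fs.independent B"
  shows "fs.independent (iota ` B :: ('i \<Rightarrow> ('a, 'e::linorder) ratfun) set)"
proof
  assume dep: "fs.dependent (iota ` B :: ('i \<Rightarrow> ('a, 'e) ratfun) set)"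
  obtain u :: "('i \<Rightarrow> ('a, 'e) ratfun) \<Rightarrow> ('a, 'e) ratfun"
    where u: "\<exists>v\<in>iota ` B. u v \<noteq> 0" "(\<Sum>v\<in>iota ` B. fscale (u v) v) = 0"
    using dep fs.dependent_finite[of "iota ` B :: ('i \<Rightarrow> ('a, 'e) ratfun) set"] assms(1) by auto
  define lam where "lam b = u (iota b)" for b
  have inj: "inj_on (iota :: ('i \<Rightarrow> 'a) \<Rightarrow> ('i \<Rightarrow> ('a, 'e) ratfun)) B"
    by (auto simp: inj_on_def iota_inj)
  have s0: "(\<Sum>b\<in>B. fscale (lam b) (iota b :: 'i \<Rightarrow> ('a, 'e) ratfun)) = 0"
    using u(2) by (simp add: lam_def sum.reindex[OF inj])
  obtain b0 where b0: "b0 \<in> B" "lam b0 \<noteq> 0" using u(1) by (auto simp: lam_def)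
  have "\<forall>b. \<exists>n d. d \<noteq> 0 \<and> lam b = Fract n d"
  proof
    fix b show "\<exists>n d. d \<noteq> 0 \<and> lam b = Fract n d" by (cases "lam b") auto
  qed
  then obtain n d where nd: "\<And>b. d b \<noteq> 0" "\<And>b. lam b = Fract (n b) (d b)" by metis
  define Q where "Q = (\<Prod>b\<in>B. d b)"
  have Qnz: "Q \<noteq> 0" using nd(1) assms(1) by (simp add: Q_def)
  define P where "P b = n b * (\<Prod>b'\<in>B-{b}. d b')" for b
  have QP: "Fract Q 1 * lam b = Fract (P b) 1" if "b \<in> B" for b
  proof -
    have "Q = d b * (\<Prod>b'\<in>B-{b}. d b')" using that assms(1) by (simp add: Q_def prod.remove)
    then show ?thesis using nd by (simp add: P_def eq_fract mult_ac)
  qed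
  have psum: "(\<Sum>b\<in>B. P b * Poly_Mapping.single 0 (b p)) = 0" for p
  proof -
    have "(\<Sum>b\<in>B. lam b * rf_const (b p)) = (0 :: ('a, 'e) ratfun)"
      using fun_cong[OF s0, of p] by (simp add: sum_fun_pt fscale_def iota_def)
    then have "Fract Q 1 * (\<Sum>b\<in>B. lam b * rf_const (b p)) = (0 :: ('a, 'e) ratfun)" by simp
    then have "(\<Sum>b\<in>B. Fract (P b) 1 * rf_const (b p)) = (0 :: ('a, 'e) ratfun)"
      by (simp add: sum_distrib_left mult.assoc[symmetric] QP cong: sum.cong)
    then have "Fract (\<Sum>b\<in>B. P b * Poly_Mapping.single 0 (b p)) 1 = 0"
      by (simp add: rf_const_def Fract_sum1)
    then show ?thesis by (simp add: Zero_fract_def eq_fract)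
  qed
  have Pz: "\<forall>b\<in>B. Poly_Mapping.lookup (P b) m = 0" for m
  proof -
    have "(\<Sum>b\<in>B. fscale (Poly_Mapping.lookup (P b) m) b) = 0"
    proof
      fix p
      have "(\<Sum>b\<in>B. fscale (Poly_Mapping.lookup (P b) m) b) p = Poly_Mapping.lookup (\<Sum>b\<in>B. P b * Poly_Mapping.single 0 (b p)) m"
        by (simp add: sum_fun_pt fscale_def lookup_sum lookup_mult_const)
      also have "\<dots> = 0" by (simp add: psum)
      finally show "(\<Sum>b\<in>B. fscale (Poly_Mapping.lookup (P b) m) b) p = 0 p" by simp
    qed
    moreover have "\<forall>S\<subseteq>B. finite S \<longrightarrow> (\<forall>u. (\<Sum>v\<in>S. fscale (u v) v) = 0 \<longrightarrow> (\<forall>v\<in>S. u v = 0))"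
      using assms(2) by (simp only: fs.independent_explicit_finite_subsets)
    then have "\<forall>u. (\<Sum>v\<in>B. fscale (u v) v) = 0 \<longrightarrow> (\<forall>v\<in>B. u v = 0)"
      using assms(1) by (meson order_refl)
    ultimately show ?thesis
      by (rule_tac mp[OF spec[of _ "\<lambda>b. Poly_Mapping.lookup (P b) m"]])
  qed
  then have "P b0 = 0" using b0(1) by (intro poly_mapping_eqI) simp
  then have "Fract Q 1 * lam b0 = 0" using QP[OF b0(1)] by (simp add: Zero_fract_def)
  moreover have "Fract Q 1 \<noteq> (0 :: ('a, 'e) ratfun)" using Qnz by (simp add: Zero_fract_def eq_fract)
  ultimately show False using b0(2) by simp
qed

lemma base_change:
  fixes S :: "('i \<Rightarrow> 'a::field) set" and W :: "('i \<Rightarrow> ('a, 'e::linorder) ratfun) set"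
  assumes "finite S" "finite W" "iota ` S \<subseteq> fs.span W"
  shows "fs.dim S \<le> fs.dim W"
proof -
  obtain B where B: "B \<subseteq> S" "fs.independent B" "S \<subseteq> fs.span B" "card B = fs.dim S"
    by (rule fs.basis_exists)
  obtain BW where BW: "BW \<subseteq> W" "fs.independent BW" "W \<subseteq> fs.span BW" "card BW = fs.dim W"
    by (rule fs.basis_exists)
  have finB: "finite B" using B(1) assms(1) finite_subset by blast
  have finBW: "finite BW" using BW(1) assms(2) finite_subset by blast
  have ind: "fs.independent (iota ` B :: ('i \<Rightarrow> ('a, 'e) ratfun) set)"
    by (rule iota_indep[OF finB B(2)])
  have "fs.span W \<subseteq> fs.span BW"
    using BW(3) by (metis fs.span_mono fs.span_span)
  then have sub: "(iota ` B :: ('i \<Rightarrow> ('a, 'e) ratfun) set) \<subseteq> fs.span BW"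
    using assms(3) B(1) by blast
  have "card (iota ` B :: ('i \<Rightarrow> ('a, 'e) ratfun) set) \<le> card BW"
    using fs.independent_span_bound[OF finBW ind sub] by simp
  moreover have "card (iota ` B :: ('i \<Rightarrow> ('a, 'e) ratfun) set) = card B"
    by (rule card_image) (auto simp: inj_on_def iota_inj)
  ultimately show ?thesis using B(4) BW(4) by simp
qed

lemma generic:
  fixes \<alpha> \<beta> :: "'e::linorder \<Rightarrow> ('i \<Rightarrow> 'a::field)"
    and \<gamma> :: "'e \<Rightarrow> ('i \<Rightarrow> ('a, 'e) ratfun)"
  assumes inf: "infinite (UNIV :: 'a set)"
    and gam: "\<And>f. \<gamma> f = iota (\<alpha> f) - fscale (psi f) (iota (\<beta> f))"
    and "e \<notin> D" "finite D" "\<gamma> e \<in> fs.span (\<gamma> ` D)"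
  shows "iota (\<alpha> e) \<in> fs.span (\<gamma> ` D) \<and> iota (\<beta> e) \<in> fs.span (\<gamma> ` D)"
proof -
  obtain c0 :: 'a where c0: "c0 \<notin> {0, 1}"
    using ex_new_if_finite[OF inf, of "{0, 1}"] by auto
  then have c0nz: "c0 \<noteq> 0" by auto
  let ?s = "scf c0 e"
  obtain c where c: "\<gamma> e = (\<Sum>f\<in>D. fscale (c f) (\<gamma> f))"
    using span_family[OF assms(4,5)] by blast
  have fix_g: "?s (\<gamma> f p) = \<gamma> f p" if "f \<in> D" for f p
  proof -
    have "f \<noteq> e" using that assms(3) by auto
    then show ?thesis
      by (simp add: gam iota_def fscale_def scf_diff[OF c0nz] scf_mult[OF c0nz] scf_const[OF c0nz]
          scf_psi_other[OF c0nz])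
  qed
  define y where "y = (\<lambda>p. ?s (\<gamma> e p))"
  have y_span: "y \<in> fs.span (\<gamma> ` D)"
  proof -
    have "y = (\<Sum>f\<in>D. fscale (?s (c f)) (\<gamma> f))"
    proof
      fix p
      have "y p = ?s (\<Sum>f\<in>D. c f * \<gamma> f p)"
        by (simp add: y_def c sum_fun_pt fscale_def)
      also have "\<dots> = (\<Sum>f\<in>D. ?s (c f) * \<gamma> f p)"
        by (simp add: scf_sum[OF c0nz] scf_mult[OF c0nz] fix_g)
      finally show "y p = (\<Sum>f\<in>D. fscale (?s (c f)) (\<gamma> f)) p"
        by (simp add: sum_fun_pt fscale_def)
    qed
    also have "\<dots> \<in> fs.span (\<gamma> ` D)"
      by (intro fs.span_sum fs.span_scale fs.span_base) auto
    finally show ?thesis .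
  qed
  define k where "k = (rf_const c0 - 1) * psi e"
  have knz: "k \<noteq> (0 :: ('a, 'e) ratfun)"
  proof -
    have "rf_const c0 \<noteq> (1 :: ('a, 'e) ratfun)"
      using c0 rf_const_inj[of c0 1, where 'b='e] by (auto simp: rf_const_1)
    then show ?thesis using psi_nonzero[of e] by (simp add: k_def)
  qed
  have diff: "\<gamma> e - y = fscale k (iota (\<beta> e))"
  proof
    fix p
    show "(\<gamma> e - y) p = fscale k (iota (\<beta> e)) p"
      by (simp add: y_def gam iota_def fscale_def scf_diff[OF c0nz] scf_mult[OF c0nz] scf_const[OF c0nz]
          scf_psi_self[OF c0nz] k_def algebra_simps)
  qed
  have ge: "\<gamma> e \<in> fs.span (\<gamma> ` D)" by (rule assms(5))
  have "fscale k (iota (\<beta> e)) \<in> fs.span (\<gamma> ` D)"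
    using fs.span_diff[OF ge y_span] diff by simp
  then have "fscale (inverse k) (fscale k (iota (\<beta> e))) \<in> fs.span (\<gamma> ` D)"
    by (rule fs.span_scale)
  moreover have "fscale (inverse k) (fscale k (iota (\<beta> e))) = iota (\<beta> e)"
    using knz by (simp add: fscale_def fun_eq_iff mult.assoc[symmetric])
  ultimately have b: "iota (\<beta> e) \<in> fs.span (\<gamma> ` D)" by simp
  have "iota (\<alpha> e) = \<gamma> e + fscale (psi e) (iota (\<beta> e))"
    by (simp add: gam)
  also have "\<dots> \<in> fs.span (\<gamma> ` D)"
    by (intro fs.span_add fs.span_scale ge b)
  finally show ?thesis using b by simp
qed



lemma dir2:
  fixes \<alpha> \<beta> :: "'e::linorder \<Rightarrow> ('i \<Rightarrow> 'a::field)"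
    and \<gamma> :: "'e \<Rightarrow> ('i \<Rightarrow> ('a, 'e) ratfun)"
  assumes inf: "infinite (UNIV :: 'a set)"
    and gam: "\<And>f. \<gamma> f = iota (\<alpha> f) - fscale (psi f) (iota (\<beta> f))"
    and "finite E"
  shows "\<exists>X\<subseteq>E. fs.dim (\<alpha> ` X \<union> \<beta> ` X) + card (E - X) \<le> fs.dim (\<gamma> ` E)"
  using assms(3)
proof (induction "card E" arbitrary: E rule: less_induct)
  case less
  show ?case
  proof (cases "\<exists>e\<in>E. \<gamma> e \<notin> fs.span (\<gamma> ` (E - {e}))")
    case True
    then obtain e where e: "e \<in> E" "\<gamma> e \<notin> fs.span (\<gamma> ` (E - {e}))" by blast
    have fin': "finite (E - {e})" using less.prems by simp
    have "card (E - {e}) < card E" using e(1) less.prems by (meson card_Diff1_less)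
    then obtain X where X: "X \<subseteq> E - {e}"
      "fs.dim (\<alpha> ` X \<union> \<beta> ` X) + card (E - {e} - X) \<le> fs.dim (\<gamma> ` (E - {e}))"
      using less.hyps[OF _ fin'] by blast
    have "\<gamma> ` E = insert (\<gamma> e) (\<gamma> ` (E - {e}))" using e(1) by blast
    then have d: "fs.dim (\<gamma> ` E) = Suc (fs.dim (\<gamma> ` (E - {e})))"
      using dim_insert_new[OF fs.span_superset[of "\<gamma> ` (E - {e})"] _ e(2)] fin' by simp
    have "E - X = insert e (E - {e} - X)" using X(1) e(1) by blast
    then have c: "card (E - X) = Suc (card (E - {e} - X))" using fin' by simp
    show ?thesis using X d c by (intro exI[of _ X]) auto
  next
    case False
    then have dep: "\<And>e. e \<in> E \<Longrightarrow> \<gamma> e \<in> fs.span (\<gamma> ` (E - {e}))" by blast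
    have "(iota ` (\<alpha> ` E \<union> \<beta> ` E) :: ('i \<Rightarrow> ('a, 'e) ratfun) set) \<subseteq> fs.span (\<gamma> ` E)"
    proof
      fix z assume "z \<in> (iota ` (\<alpha> ` E \<union> \<beta> ` E) :: ('i \<Rightarrow> ('a, 'e) ratfun) set)"
      then obtain e where e: "e \<in> E" "z = iota (\<alpha> e) \<or> z = iota (\<beta> e)" by blast
      have "iota (\<alpha> e) \<in> fs.span (\<gamma> ` (E - {e})) \<and> iota (\<beta> e) \<in> fs.span (\<gamma> ` (E - {e}))"
        using generic[OF inf gam, of e "E - {e}"] dep[OF e(1)] less.prems by simp
      moreover have "fs.span (\<gamma> ` (E - {e})) \<subseteq> fs.span (\<gamma> ` E)"
        by (rule fs.span_mono) blast
      ultimately show "z \<in> fs.span (\<gamma> ` E)" using e(2) by blast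
    qed
    then have "fs.dim (\<alpha> ` E \<union> \<beta> ` E) \<le> fs.dim (\<gamma> ` E)"
      using less.prems by (intro base_change) auto
    then show ?thesis by (intro exI[of _ E]) simp
  qed
qed

lemma dir1:
  fixes \<alpha> \<beta> :: "'e::linorder \<Rightarrow> ('i \<Rightarrow> 'a::field)"
    and \<gamma> :: "'e \<Rightarrow> ('i \<Rightarrow> ('a, 'e) ratfun)"
  assumes gam: "\<And>f. \<gamma> f = iota (\<alpha> f) - fscale (psi f) (iota (\<beta> f))"
    and "finite E" "U \<subseteq> fs.span F0" "finite F0"
  shows "fs.dim (\<gamma> ` E) \<le> fs.dim U + card (E - {e\<in>E. \<alpha> e \<in> U \<and> \<beta> e \<in> U})"
proof -
  define D where "D = {e\<in>E. \<alpha> e \<in> U \<and> \<beta> e \<in> U}"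
  have finD: "finite D" using assms(2) by (simp add: D_def)
  have "\<gamma> ` E = \<gamma> ` D \<union> \<gamma> ` (E - D)" by (auto simp: D_def)
  then have "fs.dim (\<gamma> ` E) \<le> fs.dim (\<gamma> ` D) + card (\<gamma> ` (E - D))"
    using dim_union_le[of "\<gamma> ` D" "\<gamma> ` (E - D)"] finD assms(2) by simp
  also have "card (\<gamma> ` (E - D)) \<le> card (E - D)" by (rule card_image_le) (simp add: assms(2))
  finally have 1: "fs.dim (\<gamma> ` E) \<le> fs.dim (\<gamma> ` D) + card (E - D)" by simp
  obtain BU where BU: "BU \<subseteq> U" "fs.independent BU" "U \<subseteq> fs.span BU" "card BU = fs.dim U"
    by (rule fs.basis_exists)
  have finBU: "finite BU"
    using fs.independent_span_bound[OF assms(4) BU(2)] BU(1) assms(3) by blast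
  have "\<gamma> ` D \<subseteq> fs.span (iota ` BU :: ('i \<Rightarrow> ('a, 'e) ratfun) set)"
  proof
    fix z assume "z \<in> \<gamma> ` D"
    then obtain e where e: "e \<in> D" "z = \<gamma> e" by blast
    have "\<alpha> e \<in> fs.span BU" "\<beta> e \<in> fs.span BU" using e(1) BU(3) by (auto simp: D_def)
    then have "iota (\<alpha> e) \<in> fs.span (iota ` BU :: ('i \<Rightarrow> ('a, 'e) ratfun) set)"
      "iota (\<beta> e) \<in> fs.span (iota ` BU :: ('i \<Rightarrow> ('a, 'e) ratfun) set)"
      by (auto intro: iota_span)
    then show "z \<in> fs.span (iota ` BU :: ('i \<Rightarrow> ('a, 'e) ratfun) set)"
      by (simp add: e(2) gam fs.span_diff fs.span_scale)
  qed
  then have "fs.dim (\<gamma> ` D) \<le> card (iota ` BU :: ('i \<Rightarrow> ('a, 'e) ratfun) set)"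
    using finBU by (intro fs.dim_le_card) auto
  also have "\<dots> \<le> card BU" using finBU by (rule card_image_le)
  finally show ?thesis using 1 BU(4) by (simp add: D_def)
qed



definition colh :: "('v,'e) pre_digraph \<Rightarrow> ('k::field,'v,'e) sheaf \<Rightarrow> 'e \<Rightarrow> ('v \<times> nat \<Rightarrow> 'k)" where
  "colh G T e = (\<lambda>(v, j). if v = head G e \<and> v \<in> verts G \<and> j < sv_dim T v then s_hmap T e j 0 else 0)"

definition colt :: "('v,'e) pre_digraph \<Rightarrow> ('k::field,'v,'e) sheaf \<Rightarrow> 'e \<Rightarrow> ('v \<times> nat \<Rightarrow> 'k)" where
  "colt G T e = (\<lambda>(v, j). if v = tail G e \<and> v \<in> verts G \<and> j < sv_dim T v then s_tmap T e j 0 else 0)"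

lemma inner_sum1:
  fixes n :: nat
  assumes "n \<le> 1"
  shows "(\<Sum>i<n. g i) = (if n = 1 then g 0 else (0::'k::comm_monoid_add))"
proof -
  from assms have "n = 0 \<or> n = 1" by linarith
  then show ?thesis by auto
qed

lemma dh_decomp:
  fixes T :: "('k::field,'v,'e) sheaf"
  assumes fin: "finite (arcs G)" and le: "\<forall>e\<in>arcs G. se_dim T e \<le> 1"
  shows "d_h G T w = (\<Sum>e\<in>{e\<in>arcs G. se_dim T e = 1}. fscale (w (e, 0)) (colh G T e))"
proof
  fix p :: "'v \<times> nat"
  obtain v j where p: "p = (v, j)" by (cases p)
  show "d_h G T w p = (\<Sum>e\<in>{e\<in>arcs G. se_dim T e = 1}. fscale (w (e, 0)) (colh G T e)) p"
  proof (cases "v \<in> verts G \<and> j < sv_dim T v")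
    case True
    have "d_h G T w p = (\<Sum>e\<in>{e\<in>arcs G. head G e = v}. \<Sum>i<se_dim T e. s_hmap T e j i * w (e, i))"
      using True by (simp add: d_h_def p)
    also have "\<dots> = (\<Sum>e\<in>arcs G. if head G e = v then (\<Sum>i<se_dim T e. s_hmap T e j i * w (e, i)) else 0)"
      using fin by (simp add: sum.inter_filter)
    also have "\<dots> = (\<Sum>e\<in>arcs G. if se_dim T e = 1 \<and> head G e = v then s_hmap T e j 0 * w (e, 0) else 0)"
      using le by (intro sum.cong refl) (auto simp: inner_sum1)
    also have "\<dots> = (\<Sum>e\<in>{e\<in>arcs G. se_dim T e = 1}. if head G e = v then s_hmap T e j 0 * w (e, 0) else 0)"
      using fin by (subst sum.inter_filter) (auto intro!: sum.cong)
    also have "\<dots> = (\<Sum>e\<in>{e\<in>arcs G. se_dim T e = 1}. fscale (w (e, 0)) (colh G T e)) p"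
      using True by (simp add: sum_fun_pt fscale_def colh_def p) (intro sum.cong refl, auto)
    finally show ?thesis .
  next
    case False
    then show ?thesis by (auto simp: d_h_def p sum_fun_pt fscale_def colh_def)
  qed
qed

lemma dt_decomp:
  fixes T :: "('k::field,'v,'e) sheaf"
  assumes fin: "finite (arcs G)" and le: "\<forall>e\<in>arcs G. se_dim T e \<le> 1"
  shows "d_t G T w = (\<Sum>e\<in>{e\<in>arcs G. se_dim T e = 1}. fscale (w (e, 0)) (colt G T e))"
proof
  fix p :: "'v \<times> nat"
  obtain v j where p: "p = (v, j)" by (cases p)
  show "d_t G T w p = (\<Sum>e\<in>{e\<in>arcs G. se_dim T e = 1}. fscale (w (e, 0)) (colt G T e)) p"
  proof (cases "v \<in> verts G \<and> j < sv_dim T v")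
    case True
    have "d_t G T w p = (\<Sum>e\<in>{e\<in>arcs G. tail G e = v}. \<Sum>i<se_dim T e. s_tmap T e j i * w (e, i))"
      using True by (simp add: d_t_def p)
    also have "\<dots> = (\<Sum>e\<in>arcs G. if tail G e = v then (\<Sum>i<se_dim T e. s_tmap T e j i * w (e, i)) else 0)"
      using fin by (simp add: sum.inter_filter)
    also have "\<dots> = (\<Sum>e\<in>arcs G. if se_dim T e = 1 \<and> tail G e = v then s_tmap T e j 0 * w (e, 0) else 0)"
      using le by (intro sum.cong refl) (auto simp: inner_sum1)
    also have "\<dots> = (\<Sum>e\<in>{e\<in>arcs G. se_dim T e = 1}. if tail G e = v then s_tmap T e j 0 * w (e, 0) else 0)"
      using fin by (subst sum.inter_filter) (auto intro!: sum.cong)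
    also have "\<dots> = (\<Sum>e\<in>{e\<in>arcs G. se_dim T e = 1}. fscale (w (e, 0)) (colt G T e)) p"
      using True by (simp add: sum_fun_pt fscale_def colt_def p) (intro sum.cong refl, auto)
    finally show ?thesis .
  next
    case False
    then show ?thesis by (auto simp: d_t_def p sum_fun_pt fscale_def colt_def)
  qed
qed

lemma twist_simps[simp]: "sv_dim (twist S) = sv_dim S" "se_dim (twist S) = se_dim S"
  by (simp_all add: twist_def)

lemma colh_twist: "colh G (twist S) e = iota (colh G S e)"
  by (auto simp: colh_def twist_def iota_def fun_eq_iff rf_const_0)

lemma colt_twist: "colt G (twist S) e = fscale (psi e) (iota (colt G S e))"
  by (auto simp: colt_def twist_def iota_def fun_eq_iff rf_const_0 fscale_def)

lemma fscale_diff: "fscale c (x - y) = fscale c x - fscale c y"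
  by (simp add: fscale_def fun_eq_iff algebra_simps)

lemma fscale_zero_left: "fscale 0 x = 0"
  by (simp add: fscale_def fun_eq_iff)

lemma H1_twist:
  fixes S :: "('a::field,'v,'e::linorder) sheaf"
  assumes fin: "finite (arcs G)" and le: "\<forall>e\<in>arcs G. se_dim S e \<le> 1"
  shows "H1 G (twist S) = Zs (\<lambda>e. iota (colh G S e) - fscale (psi e) (iota (colt G S e))) {e\<in>arcs G. se_dim S e = 1}"
proof -
  let ?E = "{e\<in>arcs G. se_dim S e = 1}"
  have le': "\<forall>e\<in>arcs G. se_dim (twist S) e \<le> 1" using le by simp
  have dm: "d_map G (twist S) w = (\<Sum>e\<in>?E. fscale (w (e, 0)) (iota (colh G S e) - fscale (psi e) (iota (colt G S e))))" for w
  proof -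
    have "d_map G (twist S) w = d_h G (twist S) w - d_t G (twist S) w"
      by (simp add: d_map_def fun_eq_iff)
    also have "\<dots> = (\<Sum>e\<in>?E. fscale (w (e, 0)) (iota (colh G S e))) - (\<Sum>e\<in>?E. fscale (w (e, 0)) (fscale (psi e) (iota (colt G S e))))"
      using dh_decomp[OF fin le', of w] dt_decomp[OF fin le', of w] by (simp add: colh_twist colt_twist)
    also have "\<dots> = (\<Sum>e\<in>?E. fscale (w (e, 0)) (iota (colh G S e) - fscale (psi e) (iota (colt G S e))))"
      by (simp add: fscale_diff sum_subtractf)
    finally show ?thesis .
  qed
  have supp: "(\<forall>e i. w (e, i) \<noteq> 0 \<longrightarrow> e \<in> arcs G \<and> i < se_dim S e) \<longleftrightarrow>
      (\<forall>e i. w (e, i) \<noteq> 0 \<longrightarrow> e \<in> ?E \<and> i = 0)" for w :: "'e \<times> nat \<Rightarrow> ('a, 'e) ratfun"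
  proof (intro iffI allI impI)
    fix e i assume A: "\<forall>e i. w (e, i) \<noteq> 0 \<longrightarrow> e \<in> arcs G \<and> i < se_dim S e" and nz: "w (e, i) \<noteq> 0"
    then have e: "e \<in> arcs G" "i < se_dim S e" by auto
    then have "se_dim S e \<le> 1" using le by auto
    with e show "e \<in> ?E \<and> i = 0" by auto
  next
    fix e i assume A: "\<forall>e i. w (e, i) \<noteq> 0 \<longrightarrow> e \<in> ?E \<and> i = 0" and nz: "w (e, i) \<noteq> 0"
    then show "e \<in> arcs G \<and> i < se_dim S e" by auto
  qed
  show ?thesis
    unfolding H1_def FE_def Zs_def using supp by (auto simp: dm zero_fun_def[symmetric])
qed

lemma edge_comp_0: "edge_comp e w (f, 0) = (if f = e then w (e, 0) else 0)"
  by (simp add: edge_comp_def)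

lemma sum_single_term:
  assumes "finite A"
  shows "(\<Sum>f\<in>A. fscale (if f = e then c else 0) (x f)) = (if e \<in> A then fscale c (x e) else (0 :: 'i \<Rightarrow> 'k::field))"
proof -
  have "(\<Sum>f\<in>A. fscale (if f = e then c else 0) (x f)) = (\<Sum>f\<in>A. if f = e then fscale c (x e) else 0)"
    by (intro sum.cong refl) (simp add: fscale_zero_left)
  also have "\<dots> = (if e \<in> A then fscale c (x e) else 0)"
    using assms by (simp add: sum.delta)
  finally show ?thesis .
qed

lemma dh_edge_comp:
  fixes S :: "('k::field,'v,'e) sheaf"
  assumes fin: "finite (arcs G)" and le: "\<forall>e\<in>arcs G. se_dim S e \<le> 1"
  shows "d_h G S (edge_comp e w) = (if e \<in> {e\<in>arcs G. se_dim S e = 1} then fscale (w (e, 0)) (colh G S e) else 0)"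
    and "d_t G S (edge_comp e w) = (if e \<in> {e\<in>arcs G. se_dim S e = 1} then fscale (w (e, 0)) (colt G S e) else 0)"
  using fin by (simp_all add: dh_decomp[OF fin le] dt_decomp[OF fin le] edge_comp_0 sum_single_term)

lemma subspace_scale_iff:
  assumes "fs.subspace U"
  shows "fscale c x \<in> U \<longleftrightarrow> c = 0 \<or> x \<in> U"
proof
  assume a: "fscale c x \<in> U"
  show "c = 0 \<or> x \<in> U"
  proof (cases "c = 0")
    case False
    have "fscale (inverse c) (fscale c x) \<in> U" using a assms by (rule fs.subspace_scale[rotated])
    moreover have "fscale (inverse c) (fscale c x) = x" using False by (simp add: fscale_def fun_eq_iff)
    ultimately show ?thesis by simp
  qed simp
next
  assume "c = 0 \<or> x \<in> U"
  then show "fscale c x \<in> U"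
    using assms fs.subspace_0 fs.subspace_scale by (auto simp: fscale_zero_left)
qed

lemma Gamma_eq:
  fixes S :: "('a::field,'v,'e) sheaf"
  assumes fin: "finite (arcs G)" and le: "\<forall>e\<in>arcs G. se_dim S e \<le> 1" and U: "fs.subspace U"
  shows "Gamma_ht G S U = SP ({e\<in>arcs G. se_dim S e = 1 \<and> colh G S e \<in> U \<and> colt G S e \<in> U} \<times> {0})"
proof -
  have z: "(0 :: 'v \<times> nat \<Rightarrow> 'a) \<in> U" using U by (rule fs.subspace_0)
  let ?E = "{e\<in>arcs G. se_dim S e = 1}"
  let ?EU = "{e\<in>arcs G. se_dim S e = 1 \<and> colh G S e \<in> U \<and> colt G S e \<in> U}"
  have dhe: "d_h G S (edge_comp e w) \<in> U \<and> d_t G S (edge_comp e w) \<in> U \<longleftrightarrow>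
      (e \<in> ?E \<longrightarrow> w (e, 0) = 0 \<or> (colh G S e \<in> U \<and> colt G S e \<in> U))" for e w
    by (simp add: dh_edge_comp[OF fin le] subspace_scale_iff[OF U] z) blast
  show ?thesis
  proof (rule set_eqI, rule iffI)
    fix w assume w: "w \<in> Gamma_ht G S U"
    then have fe: "\<forall>e i. w (e, i) \<noteq> 0 \<longrightarrow> e \<in> arcs G \<and> i < se_dim S e"
      and c: "\<forall>e\<in>arcs G. d_h G S (edge_comp e w) \<in> U \<and> d_t G S (edge_comp e w) \<in> U"
      by (auto simp: Gamma_ht_def FE_def)
    show "w \<in> SP (?EU \<times> {0})"
      unfolding SP_def
    proof (intro CollectI allI impI)
      fix q assume nz: "w q \<noteq> 0"
      obtain e i where q: "q = (e, i)" by (cases q)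
      have e: "e \<in> arcs G" "i < se_dim S e" using fe nz q by auto
      then have "se_dim S e \<le> 1" using le by auto
      with e have ei: "se_dim S e = 1" "i = 0" by auto
      have "colh G S e \<in> U \<and> colt G S e \<in> U"
        using c e(1) dhe[of e w] ei nz q by auto
      then show "q \<in> ?EU \<times> {0}" using q e ei by auto
    qed
  next
    fix w :: "'e \<times> nat \<Rightarrow> 'a" assume w: "w \<in> SP (?EU \<times> {0})"
    then have s: "\<forall>e i. w (e, i) \<noteq> 0 \<longrightarrow> e \<in> ?EU \<and> i = 0" by (auto simp: SP_def)
    have "w \<in> FE G S" using s by (auto simp: FE_def)
    moreover have "\<forall>e\<in>arcs G. d_h G S (edge_comp e w) \<in> U \<and> d_t G S (edge_comp e w) \<in> U"
    proof
      fix e assume "e \<in> arcs G"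
      show "d_h G S (edge_comp e w) \<in> U \<and> d_t G S (edge_comp e w) \<in> U"
        unfolding dhe using s by auto
    qed
    ultimately show "w \<in> Gamma_ht G S U" by (simp add: Gamma_ht_def)
  qed
qed



theorem theorem1:
  fixes G :: "('v, 'e::linorder) pre_digraph"
    and S :: "('a::field, 'v, 'e) sheaf"
  assumes "infinite (UNIV :: 'a set)"
    and "fin_digraph G"
    and "\<forall>e \<in> arcs G. se_dim S e \<le> 1"
  shows "int (h1_twist G S) = max_excess G S"
proof -
  note inf = assms(1) and le = assms(3)
  have fin: "finite (arcs G)" and finV: "finite (verts G)"
    using assms(2) by (simp_all add: fin_digraph.finite_arcs fin_digraph.finite_verts)
  define E1 where "E1 = {e\<in>arcs G. se_dim S e = 1}"
  have finE1: "finite E1" using fin by (simp add: E1_def)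
  define \<alpha> where "\<alpha> = colh G S"
  define \<beta> where "\<beta> = colt G S"
  define \<gamma> :: "'e \<Rightarrow> ('v \<times> nat \<Rightarrow> ('a, 'e) ratfun)"
    where "\<gamma> e = iota (\<alpha> e) - fscale (psi e) (iota (\<beta> e))" for e
  have gam: "\<And>f. \<gamma> f = iota (\<alpha> f) - fscale (psi f) (iota (\<beta> f))" by (simp add: \<gamma>_def)
  define r where "r = fs.dim (\<gamma> ` E1)"
  define h :: int where "h = int (card E1) - int r"
  have RN1: "fs.dim (Zs \<gamma> E1) + r = card E1" unfolding r_def by (rule RN[OF finE1])
  have h1: "int (h1_twist G S) = h"
  proof -
    have "H1 G (twist S) = Zs \<gamma> E1"
    proof -
      have "\<gamma> = (\<lambda>e. iota (colh G S e) - fscale (psi e) (iota (colt G S e)))"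
        by (simp add: fun_eq_iff \<gamma>_def \<alpha>_def \<beta>_def)
      then show ?thesis using H1_twist[OF fin le] by (simp add: E1_def)
    qed
    then have "h1_twist G S = fs.dim (Zs \<gamma> E1)" by (simp add: h1_twist_def vdim_eq)
    then show ?thesis using RN1 by (simp add: h_def)
  qed
  define PV where "PV = Sigma (verts G) (\<lambda>v. {..<sv_dim S v})"
  have finPV: "finite PV" using finV by (simp add: PV_def)
  have FV_eq: "FV G S = SP PV" by (auto simp: FV_def SP_def PV_def)
  have FV_span: "FV G S \<subseteq> fs.span (delta ` PV)" using FV_eq SP_span[OF finPV] by simp
  have \<alpha>SP: "\<alpha> e \<in> SP PV" "\<beta> e \<in> SP PV" for e
    by (auto simp: \<alpha>_def \<beta>_def colh_def colt_def SP_def PV_def)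
  define EU where "EU U = {e\<in>E1. \<alpha> e \<in> U \<and> \<beta> e \<in> U}" for U
  have exc: "excess G S U = int (card (EU U)) - int (fs.dim U)" if U: "fs.subspace U" for U
  proof -
    have "Gamma_ht G S U = SP (EU U \<times> {0})"
      using Gamma_eq[OF fin le U] by (simp add: EU_def E1_def \<alpha>_def \<beta>_def conj_assoc)
    moreover have "finite (EU U \<times> {0::nat})" using finE1 by (simp add: EU_def)
    ultimately have "vdim (Gamma_ht G S U) = card (EU U \<times> {0::nat})"
      by (simp add: vdim_eq dim_SP)
    then show ?thesis by (simp add: excess_def vdim_eq card_cartesian_product)
  qed
  define M where "M = {excess G S U | U. is_subspace U \<and> U \<subseteq> FV G S}"
  have upper: "m \<le> h" if mM: "m \<in> M" for m
  proof -
    obtain U where U: "m = excess G S U" "fs.subspace U" "U \<subseteq> FV G S"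
      using mM unfolding M_def is_subspace_eq by blast
    have "r \<le> fs.dim U + card (E1 - EU U)"
      using dir1[OF gam finE1 subset_trans[OF U(3) FV_span]] finPV by (simp add: r_def EU_def)
    moreover have "card (E1 - EU U) = card E1 - card (EU U)"
      using finE1 by (intro card_Diff_subset) (auto simp: EU_def)
    moreover have "card (EU U) \<le> card E1" using finE1 by (intro card_mono) (auto simp: EU_def)
    ultimately show ?thesis using U exc by (simp add: h_def)
  qed
  have lower: "- int (card PV) \<le> m" if mM: "m \<in> M" for m
  proof -
    obtain U where U: "m = excess G S U" "fs.subspace U" "U \<subseteq> FV G S"
      using mM unfolding M_def is_subspace_eq by blast
    have "fs.dim U \<le> card (delta ` PV :: ('v \<times> nat \<Rightarrow> 'a) set)"
      using finPV subset_trans[OF U(3) FV_span] by (intro fs.dim_le_card) auto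
    also have "\<dots> \<le> card PV" using finPV by (rule card_image_le)
    finally show ?thesis using U exc by simp
  qed
  have achieved: "h \<in> M"
  proof -
    obtain X where X: "X \<subseteq> E1" "fs.dim (\<alpha> ` X \<union> \<beta> ` X) + card (E1 - X) \<le> r"
      using dir2[OF inf gam finE1] by (auto simp: r_def)
    define U0 where "U0 = fs.span (\<alpha> ` X \<union> \<beta> ` X)"
    have sub: "fs.subspace U0" by (simp add: U0_def)
    have inFV: "U0 \<subseteq> FV G S"
      unfolding U0_def FV_eq using \<alpha>SP by (intro fs.span_minimal subspace_SP) auto
    have XE: "X \<subseteq> EU U0" using X(1) by (auto simp: EU_def U0_def intro: fs.span_base)
    have cX: "card X \<le> card (EU U0)"
      using finE1 XE by (intro card_mono) (auto simp: EU_def)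
    have dU: "fs.dim U0 = fs.dim (\<alpha> ` X \<union> \<beta> ` X)" by (simp add: U0_def)
    have cD: "card (E1 - X) = card E1 - card X" using X(1) finE1 by (simp add: card_Diff_subset finite_subset)
    have cXE: "card X \<le> card E1" using X(1) finE1 by (simp add: card_mono)
    have "h \<le> excess G S U0" using exc[OF sub] X cX dU cD cXE by (simp add: h_def)
    moreover have "excess G S U0 \<in> M" using sub inFV by (auto simp: M_def is_subspace_eq)
    ultimately show ?thesis using upper[of "excess G S U0"] by simp
  qed
  have finM: "finite M"
    by (rule finite_subset[of _ "{- int (card PV)..h}"]) (auto dest: upper lower)
  have "max_excess G S = Max M" by (simp add: max_excess_def M_def)
  also have "\<dots> = h" using finM achieved upper by (intro Max_eqI) auto
  finally show ?thesis using h1 by simp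
qed


end
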